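(* For any integer $t\ge 2$ and any non-singleton lattices $L_1,\dots,L_t$ of finite breadth, $$\operatorname{br}(L_1\times\dots\times L_t)=\operatorname{br}(L_1)+\dots+\operatorname{br}(L_t).$$
   Context: The breadth $\operatorname{br}(L)$ of a lattice $L$ is the least positive integer $n$ such that every join $\bigvee_{i=1}^m x_i$ with $x_i\in L$ and $m\ge n$ equals the join of some $n$ of the joinands $x_i$. *)

theory Defs
  imports "HOL-Algebra.Lattice" "HOL-Library.FuncSet"
begin

text \<open>Lattices are HOL-Algebra lattices (locale lattice, with eq being equality).
  The join of the family x 0, ..., x (m-1) is the HOL-Algebra supremum of its set
  of values.\<close>

definition breadth_le :: "('a, 'b) gorder_scheme \<Rightarrow> nat \<Rightarrow> bool" where
  "breadth_le L n \<longleftrightarrow>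
     (\<forall>m \<ge> n. \<forall>x \<in> {..<m} \<rightarrow> carrier L.
        \<exists>I \<subseteq> {..<m}. card I = n \<and> \<Squnion>\<^bsub>L\<^esub> (x ` {..<m}) = \<Squnion>\<^bsub>L\<^esub> (x ` I))"

definition finite_breadth :: "('a, 'b) gorder_scheme \<Rightarrow> bool" where
  "finite_breadth L \<longleftrightarrow> (\<exists>n \<ge> 1. breadth_le L n)"

definition breadth :: "('a, 'b) gorder_scheme \<Rightarrow> nat" where
  "breadth L = (LEAST n. n \<ge> 1 \<and> breadth_le L n)"

definition prod_lattice :: "nat \<Rightarrow> (nat \<Rightarrow> ('a, 'b) gorder_scheme) \<Rightarrow> (nat \<Rightarrow> 'a) gorder" where
  "prod_lattice t L =
     \<lparr> carrier = (\<Pi>\<^sub>E i \<in> {..<t}. carrier (L i)),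
       eq = (=),
       le = (\<lambda>x y. \<forall>i < t. x i \<sqsubseteq>\<^bsub>L i\<^esub> y i) \<rparr>"

end

theory Submission
  imports Defs
begin

lemma lat_sup:
  assumes "lattice L" "finite A" "A \<subseteq> carrier L" "A \<noteq> {}"
  shows "\<Squnion>\<^bsub>L\<^esub> A \<in> carrier L"
    and "\<And>a. a \<in> A \<Longrightarrow> a \<sqsubseteq>\<^bsub>L\<^esub> \<Squnion>\<^bsub>L\<^esub> A"
    and "\<And>u. u \<in> carrier L \<Longrightarrow> (\<And>a. a \<in> A \<Longrightarrow> a \<sqsubseteq>\<^bsub>L\<^esub> u) \<Longrightarrow> \<Squnion>\<^bsub>L\<^esub> A \<sqsubseteq>\<^bsub>L\<^esub> u"
proof -
  interpret lattice L by fact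
  have le: "least L (\<Squnion>\<^bsub>L\<^esub> A) (Upper L A)" using finite_sup_least assms by auto
  then show "\<Squnion>\<^bsub>L\<^esub> A \<in> carrier L" by auto
  show "\<And>a. a \<in> A \<Longrightarrow> a \<sqsubseteq>\<^bsub>L\<^esub> \<Squnion>\<^bsub>L\<^esub> A"
    using le assms(3) by (meson least_Upper_above)
  show "\<And>u. u \<in> carrier L \<Longrightarrow> (\<And>a. a \<in> A \<Longrightarrow> a \<sqsubseteq>\<^bsub>L\<^esub> u) \<Longrightarrow> \<Squnion>\<^bsub>L\<^esub> A \<sqsubseteq>\<^bsub>L\<^esub> u"
    using le assms(3) by (auto simp: least_def Upper_def)
qed

lemma lat_sup_eq:
  assumes "lattice L" "finite A" "A \<subseteq> carrier L" "A \<noteq> {}" "s \<in> carrier L"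
    "\<And>a. a \<in> A \<Longrightarrow> a \<sqsubseteq>\<^bsub>L\<^esub> s"
    "\<And>u. u \<in> carrier L \<Longrightarrow> (\<And>a. a \<in> A \<Longrightarrow> a \<sqsubseteq>\<^bsub>L\<^esub> u) \<Longrightarrow> s \<sqsubseteq>\<^bsub>L\<^esub> u"
  shows "\<Squnion>\<^bsub>L\<^esub> A = s"
proof -
  interpret lattice L by fact
  have 1: "\<Squnion>\<^bsub>L\<^esub> A \<sqsubseteq>\<^bsub>L\<^esub> s" using lat_sup(3)[OF assms(1-4)] assms by blast
  have 2: "s \<sqsubseteq>\<^bsub>L\<^esub> \<Squnion>\<^bsub>L\<^esub> A" using lat_sup[OF assms(1-4)] assms by blast
  show ?thesis using 1 2 lat_sup(1)[OF assms(1-4)] assms(5) le_antisym by blast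
qed

lemma lat_sup_mono:
  assumes "lattice L" "finite A" "A \<subseteq> carrier L" "B \<subseteq> A" "B \<noteq> {}"
  shows "\<Squnion>\<^bsub>L\<^esub> B \<sqsubseteq>\<^bsub>L\<^esub> \<Squnion>\<^bsub>L\<^esub> A"
proof -
  have fB: "finite B" using assms finite_subset by blast
  have A0: "A \<noteq> {}" using assms by blast
  show ?thesis
    apply (rule lat_sup(3)[OF assms(1) fB _ assms(5)])
    using assms lat_sup[OF assms(1-3) A0] by auto
qed

lemma lat_sandwich:
  assumes "lattice L" "finite A" "A \<subseteq> carrier L" "J \<subseteq> I" "I \<subseteq> A" "J \<noteq> {}"
    "\<Squnion>\<^bsub>L\<^esub> J = \<Squnion>\<^bsub>L\<^esub> A"
  shows "\<Squnion>\<^bsub>L\<^esub> I = \<Squnion>\<^bsub>L\<^esub> A"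
proof -
  interpret lattice L by fact
  have I0: "I \<noteq> {}" using assms by blast
  have fI: "finite I" using assms finite_subset by blast
  have IC: "I \<subseteq> carrier L" using assms by blast
  have 1: "\<Squnion>\<^bsub>L\<^esub> I \<sqsubseteq>\<^bsub>L\<^esub> \<Squnion>\<^bsub>L\<^esub> A" using lat_sup_mono assms I0 by blast
  have 2: "\<Squnion>\<^bsub>L\<^esub> J \<sqsubseteq>\<^bsub>L\<^esub> \<Squnion>\<^bsub>L\<^esub> I" using lat_sup_mono[OF assms(1) fI IC assms(4) assms(6)] .
  show ?thesis using 1 2 assms(7) le_antisym lat_sup(1)[OF assms(1) fI IC I0]
      lat_sup(1)[OF assms(1,2,3)] I0 assms(5) by force
qed

lemma lat_sup_insert_below:
  assumes "lattice L" "finite A" "A \<subseteq> carrier L" "A \<noteq> {}" "c \<in> carrier L"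
    "c \<sqsubseteq>\<^bsub>L\<^esub> \<Squnion>\<^bsub>L\<^esub> A"
  shows "\<Squnion>\<^bsub>L\<^esub> (insert c A) = \<Squnion>\<^bsub>L\<^esub> A"
  apply (rule lat_sup_eq)
  using assms lat_sup[OF assms(1-4)] by auto

lemma lat_sup_single:
  assumes "lattice L" "x \<in> carrier L"
  shows "\<Squnion>\<^bsub>L\<^esub> {x} = x"
proof -
  interpret lattice L by fact
  show ?thesis apply (rule lat_sup_eq) using assms by auto
qed

lemma lat_inf:
  assumes "lattice L" "finite A" "A \<subseteq> carrier L" "A \<noteq> {}"
  shows "\<Sqinter>\<^bsub>L\<^esub> A \<in> carrier L" "\<And>a. a \<in> A \<Longrightarrow> \<Sqinter>\<^bsub>L\<^esub> A \<sqsubseteq>\<^bsub>L\<^esub> a"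
proof -
  interpret lattice L by fact
  have g: "greatest L (\<Sqinter>\<^bsub>L\<^esub> A) (Lower L A)" using finite_inf_greatest assms by auto
  then show "\<Sqinter>\<^bsub>L\<^esub> A \<in> carrier L" by auto
  show "\<And>a. a \<in> A \<Longrightarrow> \<Sqinter>\<^bsub>L\<^esub> A \<sqsubseteq>\<^bsub>L\<^esub> a"
    using g assms(3) by (auto simp: greatest_def Lower_def)
qed

lemma prod_carrier: "carrier (prod_lattice t L) = (\<Pi>\<^sub>E i \<in> {..<t}. carrier (L i))"
  by (simp add: prod_lattice_def)

lemma prod_le: "x \<sqsubseteq>\<^bsub>prod_lattice t L\<^esub> y \<longleftrightarrow> (\<forall>i < t. x i \<sqsubseteq>\<^bsub>L i\<^esub> y i)"
  by (simp add: prod_lattice_def)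

lemma prod_sup:
  assumes lat: "\<And>i. i < t \<Longrightarrow> lattice (L i)" and A: "finite A" "A \<subseteq> carrier (prod_lattice t L)" "A \<noteq> {}"
  shows "\<Squnion>\<^bsub>prod_lattice t L\<^esub> A = (\<lambda>i. if i < t then \<Squnion>\<^bsub>L i\<^esub> ((\<lambda>f. f i) ` A) else undefined)"
    (is "_ = ?s")
proof -
  let ?P = "prod_lattice t L"
  have pc: "\<And>i. i < t \<Longrightarrow> (\<lambda>f. f i) ` A \<subseteq> carrier (L i)"
    using A(2) by (auto simp: prod_carrier PiE_iff)
  have pf: "\<And>i. finite ((\<lambda>f. f i) ` A)" using A by auto
  have pn: "\<And>i. (\<lambda>f. f i) ` A \<noteq> {}" using A by auto
  have sC: "?s \<in> carrier ?P"
    using lat_sup(1)[OF lat pf pc pn] by (auto simp: prod_carrier PiE_iff extensional_def)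
  have sup: "\<And>a. a \<in> A \<Longrightarrow> a \<sqsubseteq>\<^bsub>?P\<^esub> ?s"
    using lat_sup(2)[OF lat pf pc pn] by (auto simp: prod_le)
  have least: "\<And>u. u \<in> carrier ?P \<Longrightarrow> (\<And>a. a \<in> A \<Longrightarrow> a \<sqsubseteq>\<^bsub>?P\<^esub> u) \<Longrightarrow> ?s \<sqsubseteq>\<^bsub>?P\<^esub> u"
  proof -
    fix u assume u: "u \<in> carrier ?P" "\<And>a. a \<in> A \<Longrightarrow> a \<sqsubseteq>\<^bsub>?P\<^esub> u"
    show "?s \<sqsubseteq>\<^bsub>?P\<^esub> u" unfolding prod_le
    proof (intro allI impI)
      fix i assume i: "i < t"
      have "u i \<in> carrier (L i)" using u i by (auto simp: prod_carrier PiE_iff)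
      moreover have "\<And>b. b \<in> (\<lambda>f. f i) ` A \<Longrightarrow> b \<sqsubseteq>\<^bsub>L i\<^esub> u i"
        using u(2) i by (auto simp: prod_le)
      ultimately show "?s i \<sqsubseteq>\<^bsub>L i\<^esub> u i"
        using lat_sup(3)[OF lat[OF i] pf pc[OF i] pn] i by auto
    qed
  qed
  have lst: "least ?P ?s (Upper ?P A)"
    apply (rule least_UpperI) using sup least sC A by (auto simp: Upper_def)
  have uniq: "y = ?s" if y: "least ?P y (Upper ?P A)" for y
  proof -
    have yC: "y \<in> carrier ?P" using y by auto
    have "y \<sqsubseteq>\<^bsub>?P\<^esub> ?s" using y lst by (meson least_le least_mem)
    moreover have "?s \<sqsubseteq>\<^bsub>?P\<^esub> y" using y lst by (meson least_le least_mem)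
    ultimately have "\<forall>i<t. y i = ?s i"
    proof (intro allI impI)
      fix i assume i: "i < t" "y \<sqsubseteq>\<^bsub>?P\<^esub> ?s" "?s \<sqsubseteq>\<^bsub>?P\<^esub> y"
      interpret lattice "L i" using lat i by auto
      show "y i = ?s i" using i yC sC by (intro le_antisym) (auto simp: prod_le prod_carrier PiE_iff)
    qed
    then show ?thesis using yC sC by (auto simp: prod_carrier PiE_iff extensional_def)
  qed
  show ?thesis apply (subst sup_def[of ?P])
    by (rule some_equality[where P="\<lambda>x. least ?P x (Upper ?P A)", OF lst uniq])
qed

lemma prod_sup_i:
  assumes lat: "\<And>i. i < t \<Longrightarrow> lattice (L i)" and A: "finite A" "A \<subseteq> carrier (prod_lattice t L)" "A \<noteq> {}"
    and i: "i < t"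
  shows "(\<Squnion>\<^bsub>prod_lattice t L\<^esub> A) i = \<Squnion>\<^bsub>L i\<^esub> ((\<lambda>f. f i) ` A)"
  using prod_sup[OF assms(1-4)] i by simp

lemma breadth_basic:
  assumes "finite_breadth L"
  shows "breadth L \<ge> 1" "breadth_le L (breadth L)"
    "\<And>k. 1 \<le> k \<Longrightarrow> k < breadth L \<Longrightarrow> \<not> breadth_le L k"
proof -
  obtain n where n: "n \<ge> 1" "breadth_le L n" using assms by (auto simp: finite_breadth_def)
  have "1 \<le> breadth L \<and> breadth_le L (breadth L)"
    unfolding breadth_def by (rule LeastI[of _ n]) (use n in auto)
  then show "breadth L \<ge> 1" "breadth_le L (breadth L)" by auto
  show "\<And>k. 1 \<le> k \<Longrightarrow> k < breadth L \<Longrightarrow> \<not> breadth_le L k"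
    unfolding breadth_def using not_less_Least by blast
qed

lemma breadth_family:
  assumes lat: "lattice L" and fb: "finite_breadth L" and b2: "2 \<le> breadth L"
  shows "\<exists>a \<in> {..<breadth L} \<rightarrow> carrier L. \<forall>j < breadth L.
     \<Squnion>\<^bsub>L\<^esub> (a ` ({..<breadth L} - {j})) \<noteq> \<Squnion>\<^bsub>L\<^esub> (a ` {..<breadth L})"
proof -
  define b where "b = breadth L"
  have nb: "\<not> breadth_le L (b - 1)" using breadth_basic(3)[OF fb, of "b - 1"] b2 b_def by auto
  then obtain m x where m: "m \<ge> b - 1" and x: "x \<in> {..<m} \<rightarrow> carrier L"
    and noI: "\<And>I. I \<subseteq> {..<m} \<Longrightarrow> card I = b - 1 \<Longrightarrow> \<Squnion>\<^bsub>L\<^esub> (x ` {..<m}) \<noteq> \<Squnion>\<^bsub>L\<^esub> (x ` I)"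
    unfolding breadth_le_def by blast
  have "m \<noteq> b - 1" using noI[of "{..<m}"] by auto
  then have mb: "m \<ge> b" using m by auto
  obtain I where I: "I \<subseteq> {..<m}" "card I = b" "\<Squnion>\<^bsub>L\<^esub> (x ` {..<m}) = \<Squnion>\<^bsub>L\<^esub> (x ` I)"
    using breadth_basic(2)[OF fb] mb x unfolding breadth_le_def b_def by blast
  have fI: "finite I" using I(1) finite_subset by blast
  obtain g where g: "bij_betw g {0..<b} I" using ex_bij_betw_nat_finite[OF fI] I(2) by auto
  have g': "bij_betw g {..<b} I" using g by (simp add: lessThan_atLeast0)
  define a where "a = x \<circ> g"
  have aC: "a \<in> {..<b} \<rightarrow> carrier L" using x g' I(1) unfolding a_def bij_betw_def by (force simp: Pi_def subset_eq)
  have "\<forall>j < b. \<Squnion>\<^bsub>L\<^esub> (a ` ({..<b} - {j})) \<noteq> \<Squnion>\<^bsub>L\<^esub> (a ` {..<b})"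
  proof (intro allI impI)
    fix j assume j: "j < b"
    have e1: "g ` ({..<b} - {j}) = I - {g j}"
      using g' j unfolding bij_betw_def by (metis Diff_subset empty_subsetI insert_subset inj_on_image_set_diff image_empty image_insert lessThan_iff)
    have e2: "g ` {..<b} = I" using g' unfolding bij_betw_def by simp
    have gj: "g j \<in> I" using g' j unfolding bij_betw_def by auto
    have "card (I - {g j}) = b - 1" using gj fI I(2) by simp
    then have "\<Squnion>\<^bsub>L\<^esub> (x ` {..<m}) \<noteq> \<Squnion>\<^bsub>L\<^esub> (x ` (I - {g j}))" using noI I(1) by blast
    then show "\<Squnion>\<^bsub>L\<^esub> (a ` ({..<b} - {j})) \<noteq> \<Squnion>\<^bsub>L\<^esub> (a ` {..<b})"
      unfolding a_def image_comp[symmetric] e1 e2 I(3) by metis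
  qed
  then show ?thesis using aC b_def by auto
qed

lemma coord_witness:
  assumes lat: "lattice L" and ns: "\<exists>x \<in> carrier L. \<exists>y \<in> carrier L. x \<noteq> y"
    and fb: "finite_breadth L"
  shows "\<exists>a c. a \<in> {..<breadth L} \<rightarrow> carrier L \<and> c \<in> carrier L \<and> (\<forall>j < breadth L.
     \<Squnion>\<^bsub>L\<^esub> (insert c (a ` ({..<breadth L} - {j}))) \<noteq> \<Squnion>\<^bsub>L\<^esub> (insert c (a ` {..<breadth L})))"
proof -
  interpret lattice L by fact
  define b where "b = breadth L"
  have b1: "b \<ge> 1" using breadth_basic(1)[OF fb] b_def by auto
  show ?thesis
  proof (cases "b = 1")
    case True
    obtain x y where xy: "x \<in> carrier L" "y \<in> carrier L" "\<not> y \<sqsubseteq>\<^bsub>L\<^esub> x"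
      using ns le_antisym by blast
    define s where "s = \<Squnion>\<^bsub>L\<^esub> {x, y}"
    have sC: "s \<in> carrier L" and xs: "x \<sqsubseteq>\<^bsub>L\<^esub> s" and ys: "y \<sqsubseteq>\<^bsub>L\<^esub> s"
      using lat_sup[OF lat, of "{x,y}"] xy unfolding s_def by auto
    have sx: "s \<noteq> x" using ys xy by auto
    have e0: "{..<b} - {0} = {}" "{..<b} = {0}" using True by auto
    have "\<Squnion>\<^bsub>L\<^esub> (insert x ((\<lambda>_. s) ` ({..<b} - {0}))) = x"
      using e0 lat_sup_single[OF lat xy(1)] by simp
    moreover have "\<Squnion>\<^bsub>L\<^esub> (insert x ((\<lambda>_. s) ` {..<b})) = s"
      using e0 lat_sup_insert_below[OF lat, of "{s}" x] lat_sup_single[OF lat sC] xy sC xs by simp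
    ultimately show ?thesis using sx sC xy True b_def
      by (intro exI[of _ "\<lambda>_. s"] exI[of _ x]) auto
  next
    case False
    then have b2: "b \<ge> 2" using b1 by auto
    obtain a where aC: "a \<in> {..<b} \<rightarrow> carrier L"
      and ap: "\<forall>j < b. \<Squnion>\<^bsub>L\<^esub> (a ` ({..<b} - {j})) \<noteq> \<Squnion>\<^bsub>L\<^esub> (a ` {..<b})"
      using breadth_family[OF lat fb] b2 b_def by auto
    define c where "c = \<Sqinter>\<^bsub>L\<^esub> (a ` {..<b})"
    have "0 \<in> {..<b}" using b1 by simp
    then have ne: "a ` {..<b} \<noteq> {}" by blast
    have aC': "a ` {..<b} \<subseteq> carrier L" using aC by auto
    have cC: "c \<in> carrier L" and ca: "\<And>j. j < b \<Longrightarrow> c \<sqsubseteq>\<^bsub>L\<^esub> a j"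
      using lat_inf[OF lat _ aC' ne] unfolding c_def by auto
    have key: "\<Squnion>\<^bsub>L\<^esub> (insert c (a ` B)) = \<Squnion>\<^bsub>L\<^esub> (a ` B)" if B: "B \<subseteq> {..<b}" "B \<noteq> {}" for B
    proof -
      obtain j where j: "j \<in> B" using B by auto
      have fB: "finite (a ` B)" using B finite_subset by blast
      have BC: "a ` B \<subseteq> carrier L" using B aC by auto
      have "a j \<sqsubseteq>\<^bsub>L\<^esub> \<Squnion>\<^bsub>L\<^esub> (a ` B)" using lat_sup(2)[OF lat fB BC] j by auto
      moreover have "c \<sqsubseteq>\<^bsub>L\<^esub> a j" using ca j B by auto
      ultimately have "c \<sqsubseteq>\<^bsub>L\<^esub> \<Squnion>\<^bsub>L\<^esub> (a ` B)"
        using le_trans cC aC j B lat_sup(1)[OF lat fB BC] by blast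
      then show ?thesis using lat_sup_insert_below[OF lat fB BC] cC B by auto
    qed
    have "\<forall>j < b. \<Squnion>\<^bsub>L\<^esub> (insert c (a ` ({..<b} - {j}))) \<noteq> \<Squnion>\<^bsub>L\<^esub> (insert c (a ` {..<b}))"
    proof (intro allI impI)
      fix j assume j: "j < b"
      have "(if j = 0 then 1 else 0) \<in> {..<b} - {j}" using b2 j by auto
      then have "{..<b} - {j} \<noteq> {}" by blast
      then show "\<Squnion>\<^bsub>L\<^esub> (insert c (a ` ({..<b} - {j}))) \<noteq> \<Squnion>\<^bsub>L\<^esub> (insert c (a ` {..<b}))"
        using key[of "{..<b} - {j}"] key[of "{..<b}"] ap j \<open>0 \<in> {..<b}\<close> by (metis Diff_subset empty_iff subset_refl)
    qed
    then show ?thesis using aC cC b_def by blast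
  qed
qed

theorem lemma2p2:
  fixes t :: nat and L :: "nat \<Rightarrow> 'a gorder"
  assumes "t \<ge> 2"
    and "\<And>i. i < t \<Longrightarrow> lattice (L i)"
    and "\<And>i. i < t \<Longrightarrow> \<exists>x \<in> carrier (L i). \<exists>y \<in> carrier (L i). x \<noteq> y"
    and "\<And>i. i < t \<Longrightarrow> finite_breadth (L i)"
  shows "breadth (prod_lattice t L) = (\<Sum>i<t. breadth (L i))"
proof -
  note lat = assms(2)
  let ?P = "prod_lattice t L"
  define b where "b i = breadth (L i)" for i
  define S where "S = (\<Sum>i<t. b i)"
  have b1: "\<And>i. i < t \<Longrightarrow> b i \<ge> 1" using breadth_basic(1)[OF assms(4)] b_def by auto
  have bl: "\<And>i. i < t \<Longrightarrow> breadth_le (L i) (b i)" using breadth_basic(2)[OF assms(4)] b_def by auto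
  have bS: "\<And>i. i < t \<Longrightarrow> b i \<le> S" unfolding S_def by (rule member_le_sum) auto
  have S1: "S \<ge> 1" using bS[of 0] b1[of 0] assms(1) by auto
  have up: "breadth_le ?P S"
    unfolding breadth_le_def
  proof (intro allI impI ballI)
    fix m x assume m: "S \<le> m" and x: "x \<in> {..<m} \<rightarrow> carrier ?P"
    have xi: "\<And>i. i < t \<Longrightarrow> (\<lambda>k. x k i) \<in> {..<m} \<rightarrow> carrier (L i)"
      using x by (auto simp: prod_carrier PiE_iff Pi_def)
    have "\<forall>i\<in>{..<t}. \<exists>J. J \<subseteq> {..<m} \<and> card J = b i \<and>
        \<Squnion>\<^bsub>L i\<^esub> ((\<lambda>k. x k i) ` {..<m}) = \<Squnion>\<^bsub>L i\<^esub> ((\<lambda>k. x k i) ` J)"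
    proof
      fix i assume i: "i \<in> {..<t}"
      have "b i \<le> m" using bS[of i] i m by auto
      then show "\<exists>J. J \<subseteq> {..<m} \<and> card J = b i \<and>
        \<Squnion>\<^bsub>L i\<^esub> ((\<lambda>k. x k i) ` {..<m}) = \<Squnion>\<^bsub>L i\<^esub> ((\<lambda>k. x k i) ` J)"
        using bl[of i] xi[of i] i unfolding breadth_le_def by blast
    qed
    then obtain II where II: "\<And>i. i \<in> {..<t} \<Longrightarrow> II i \<subseteq> {..<m} \<and> card (II i) = b i \<and>
        \<Squnion>\<^bsub>L i\<^esub> ((\<lambda>k. x k i) ` {..<m}) = \<Squnion>\<^bsub>L i\<^esub> ((\<lambda>k. x k i) ` II i)"
      by metis
    define U where "U = (\<Union>i\<in>{..<t}. II i)"
    have Um: "U \<subseteq> {..<m}" using II unfolding U_def by blast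
    have fU: "finite U" using Um finite_subset by blast
    have "card U \<le> (\<Sum>i<t. card (II i))" unfolding U_def by (rule card_UN_le) auto
    also have "\<dots> = S" unfolding S_def using II by simp
    finally have cU: "card U \<le> S" .
    have "card ({..<m} - U) = m - card U" using Um fU by (simp add: card_Diff_subset)
    then have "S - card U \<le> card ({..<m} - U)" using m by simp
    then obtain T where T: "T \<subseteq> {..<m} - U" "card T = S - card U" "finite T"
      by (rule obtain_subset_with_card_n)
    define I where "I = U \<union> T"
    have Im: "I \<subseteq> {..<m}" using Um T unfolding I_def by blast
    have cI: "card I = S" unfolding I_def using T fU cU by (subst card_Un_disjoint) auto
    show "\<exists>I\<subseteq>{..<m}. card I = S \<and> \<Squnion>\<^bsub>?P\<^esub> (x ` {..<m}) = \<Squnion>\<^bsub>?P\<^esub> (x ` I)"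
    proof (intro exI conjI)
      show "I \<subseteq> {..<m}" "card I = S" by fact+
      have I0: "I \<noteq> {}" using cI S1 by auto
      have m0: "{..<m} \<noteq> {}" using Im I0 by blast
      have xm: "x ` {..<m} \<subseteq> carrier ?P" using x by blast
      have xI: "x ` I \<subseteq> carrier ?P" using x Im by blast
      have fI: "finite I" using Im finite_subset by blast
      show "\<Squnion>\<^bsub>?P\<^esub> (x ` {..<m}) = \<Squnion>\<^bsub>?P\<^esub> (x ` I)"
      proof (rule ext)
        fix i
        show "(\<Squnion>\<^bsub>?P\<^esub> (x ` {..<m})) i = (\<Squnion>\<^bsub>?P\<^esub> (x ` I)) i"
        proof (cases "i < t")
          case False
          then show ?thesis using prod_sup[OF lat _ xm] prod_sup[OF lat fI[THEN finite_imageI] xI] I0 m0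
            by simp
        next
          case True
          have e: "\<And>A. (\<lambda>f. f i) ` (x ` A) = (\<lambda>k. x k i) ` A" by (simp add: image_image)
          have IIi: "II i \<subseteq> I" "II i \<noteq> {}" using True b1[of i] II[of i] unfolding I_def U_def by auto
          have "\<Squnion>\<^bsub>L i\<^esub> ((\<lambda>k. x k i) ` I) = \<Squnion>\<^bsub>L i\<^esub> ((\<lambda>k. x k i) ` {..<m})"
            apply (rule lat_sandwich[OF lat[OF True], of _ "(\<lambda>k. x k i) ` II i"])
            using xi[OF True] IIi Im II[of i] True by auto
          then show ?thesis
            using prod_sup_i[OF lat _ xm _ True] prod_sup_i[OF lat fI[THEN finite_imageI] xI _ True] I0 m0
            by (simp add: e)
        qed
      qed
    qed
  qed
  have low: "\<not> breadth_le ?P k" if k: "1 \<le> k" "k < S" for k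
  proof
    assume bk: "breadth_le ?P k"
    have "\<forall>i\<in>{..<t}. \<exists>a c. a \<in> {..<b i} \<rightarrow> carrier (L i) \<and> c \<in> carrier (L i) \<and> (\<forall>j < b i.
     \<Squnion>\<^bsub>L i\<^esub> (insert c (a ` ({..<b i} - {j}))) \<noteq> \<Squnion>\<^bsub>L i\<^esub> (insert c (a ` {..<b i})))"
      using coord_witness[OF lat assms(3) assms(4)] b_def by auto
    then obtain AA C where W: "\<And>i. i \<in> {..<t} \<Longrightarrow> AA i \<in> {..<b i} \<rightarrow> carrier (L i) \<and> C i \<in> carrier (L i) \<and> (\<forall>j < b i.
     \<Squnion>\<^bsub>L i\<^esub> (insert (C i) (AA i ` ({..<b i} - {j}))) \<noteq> \<Squnion>\<^bsub>L i\<^esub> (insert (C i) (AA i ` {..<b i})))"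
      by metis
    define Q where "Q = (SIGMA i:{..<t}. {..<b i})"
    have cQ: "card Q = S" unfolding Q_def S_def by simp
    have fQ: "finite Q" unfolding Q_def by auto
    obtain h where h: "bij_betw h {..<S} Q"
      using ex_bij_betw_nat_finite[OF fQ] cQ by (auto simp: lessThan_atLeast0)
    define e where "e q = (\<lambda>k. if k < t then (if k = fst q then AA (fst q) (snd q) else C k) else undefined)" for q
    define x where "x = e \<circ> h"
    have eC: "e q \<in> carrier ?P" if q: "q \<in> Q" for q
      using q W unfolding e_def Q_def by (auto simp: prod_carrier PiE_iff Pi_def extensional_def)
    have hQ: "h ` {..<S} = Q" using h by (simp add: bij_betw_def)
    have xC: "x \<in> {..<S} \<rightarrow> carrier ?P" unfolding x_def using eC hQ by (simp add: Pi_def image_subset_iff) blast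
    obtain I where I: "I \<subseteq> {..<S}" "card I = k" "\<Squnion>\<^bsub>?P\<^esub> (x ` {..<S}) = \<Squnion>\<^bsub>?P\<^esub> (x ` I)"
      using bk xC k unfolding breadth_le_def by (meson less_imp_le)
    obtain p where p: "p < S" "p \<notin> I"
    proof -
      have "\<not> {..<S} \<subseteq> I" using I k
        by (metis card_lessThan card_mono finite_lessThan finite_subset leD)
      then show ?thesis using that by blast
    qed
    obtain i j where ij: "h p = (i, j)" by (cases "h p") auto
    have hp: "h p \<in> Q" using hQ p by blast
    then have i: "i < t" and j: "j < b i" using ij unfolding Q_def by auto
    define i' where "i' = (if i = 0 then 1 else 0::nat)"
    have i': "i' < t" "i' \<noteq> i" using assms(1) i unfolding i'_def by auto
    have i'Q: "(i', 0) \<in> Q" using i' b1[of i'] unfolding Q_def by auto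
    have eq1: "(\<lambda>q. e q i) ` (Q - {(i, j)}) = insert (C i) (AA i ` ({..<b i} - {j}))"
    proof (rule equalityI; rule subsetI)
      fix y assume "y \<in> (\<lambda>q. e q i) ` (Q - {(i, j)})"
      then obtain q1 q2 where q: "(q1, q2) \<in> Q - {(i, j)}" "y = e (q1, q2) i" by auto
      then show "y \<in> insert (C i) (AA i ` ({..<b i} - {j}))"
        using i unfolding e_def Q_def by (cases "q1 = i") auto
    next
      fix y assume "y \<in> insert (C i) (AA i ` ({..<b i} - {j}))"
      then consider "y = C i" | j' where "j' < b i" "j' \<noteq> j" "y = AA i j'" by auto
      then show "y \<in> (\<lambda>q. e q i) ` (Q - {(i, j)})"
      proof cases
        case 1
        then have "y = e (i', 0) i" using i i' unfolding e_def by auto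
        then show ?thesis using i'Q i' by (intro rev_image_eqI[of "(i', 0)"]) auto
      next
        case 2
        then have "y = e (i, j') i" using i unfolding e_def by auto
        then show ?thesis using 2 i unfolding Q_def by (intro rev_image_eqI[of "(i, j')"]) auto
      qed
    qed
    have eq2: "(\<lambda>q. e q i) ` Q = insert (C i) (AA i ` {..<b i})"
    proof (rule equalityI; rule subsetI)
      fix y assume "y \<in> (\<lambda>q. e q i) ` Q"
      then obtain q1 q2 where q: "(q1, q2) \<in> Q" "y = e (q1, q2) i" by auto
      then show "y \<in> insert (C i) (AA i ` {..<b i})"
        using i unfolding e_def Q_def by (cases "q1 = i") auto
    next
      fix y assume "y \<in> insert (C i) (AA i ` {..<b i})"
      then consider "y = C i" | j' where "j' < b i" "y = AA i j'" by auto
      then show "y \<in> (\<lambda>q. e q i) ` Q"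
      proof cases
        case 1
        then have "y = e (i', 0) i" using i i' unfolding e_def by auto
        then show ?thesis using i'Q by (intro rev_image_eqI[of "(i', 0)"]) auto
      next
        case 2
        then have "y = e (i, j') i" using i unfolding e_def by auto
        then show ?thesis using 2 i unfolding Q_def by (intro rev_image_eqI[of "(i, j')"]) auto
      qed
    qed
    have hD: "h ` ({..<S} - {p}) = Q - {(i, j)}"
      using h p ij unfolding bij_betw_def
      by (metis empty_subsetI hQ image_empty image_insert inj_on_image_set_diff insert_subset lessThan_iff Diff_subset)
    have pr: "\<And>A. (\<lambda>f. f i) ` (x ` A) = (\<lambda>q. e q i) ` (h ` A)" unfolding x_def by (simp add: image_image)
    have I0: "I \<noteq> {}" using I(2) k by auto
    have S0: "{..<S} \<noteq> {}" using p by auto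
    have xS: "x ` {..<S} \<subseteq> carrier ?P" using xC by blast
    have xI: "x ` I \<subseteq> carrier ?P" using xC I(1) by blast
    have fI: "finite I" using I(1) finite_subset by blast
    have eqA: "\<Squnion>\<^bsub>L i\<^esub> ((\<lambda>f. f i) ` (x ` {..<S})) = \<Squnion>\<^bsub>L i\<^esub> ((\<lambda>f. f i) ` (x ` I))"
      using I(3) prod_sup_i[OF lat _ xS _ i] prod_sup_i[OF lat fI[THEN finite_imageI] xI _ i] I0 S0
      by simp
    have "\<Squnion>\<^bsub>L i\<^esub> ((\<lambda>f. f i) ` (x ` ({..<S} - {p}))) = \<Squnion>\<^bsub>L i\<^esub> ((\<lambda>f. f i) ` (x ` {..<S}))"
    proof (rule lat_sandwich[OF lat[OF i], of _ "(\<lambda>f. f i) ` (x ` I)"])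
      show "finite ((\<lambda>f. f i) ` x ` {..<S})" by simp
      have "\<And>f. f \<in> carrier ?P \<Longrightarrow> f i \<in> carrier (L i)" using i by (simp add: prod_carrier PiE_iff)
      then show "(\<lambda>f. f i) ` x ` {..<S} \<subseteq> carrier (L i)" using xS by blast
      have "I \<subseteq> {..<S} - {p}" using I(1) p by blast
      then show "(\<lambda>f. f i) ` x ` I \<subseteq> (\<lambda>f. f i) ` x ` ({..<S} - {p})" by (intro image_mono)
      show "(\<lambda>f. f i) ` x ` ({..<S} - {p}) \<subseteq> (\<lambda>f. f i) ` x ` {..<S}" by (intro image_mono) blast
      show "(\<lambda>f. f i) ` x ` I \<noteq> {}" using I0 by blast
    qed (rule eqA[symmetric])
    then have "\<Squnion>\<^bsub>L i\<^esub> (insert (C i) (AA i ` ({..<b i} - {j}))) = \<Squnion>\<^bsub>L i\<^esub> (insert (C i) (AA i ` {..<b i}))"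
      unfolding pr hD hQ eq1 eq2 .
    then show False using W[of i] i j by auto
  qed
  have "breadth ?P = S"
    unfolding breadth_def
  proof (rule Least_equality)
    show "1 \<le> S \<and> breadth_le ?P S" using S1 up by auto
    show "\<And>y. 1 \<le> y \<and> breadth_le ?P y \<Longrightarrow> S \<le> y" using low by force
  qed
  then show ?thesis unfolding S_def b_def .
qed

end
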